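(* Let $|x_1\rangle,\dots,|x_n\rangle\in\mathbb{C}^d$ be such that (i) they are linearly independent over $\mathbb{R}$, and (ii) $\langle x_j|x_k\rangle\in\mathbb{R}$ for all $j,k=1,\dots,n$. Then $n\le d$.
   Context: $\langle x|y\rangle=\sum_ix_i^*y_i$ denotes the standard Hermitian inner product on $\mathbb{C}^d$. *)

theory Defs
  imports "HOL-Analysis.Analysis"
begin

definition herm_inner :: "complex ^ 'd \<Rightarrow> complex ^ 'd \<Rightarrow> complex" where
  "herm_inner x y = (\<Sum>i\<in>UNIV. cnj (x $ i) * y $ i)"

end

theory Submission
  imports Defs
begin

lemma hi_sum_right:
  "herm_inner y (\<Sum>j\<in>A. a j *s x j) = (\<Sum>j\<in>A. a j * herm_inner y (x j))"
  unfolding herm_inner_def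
  by (simp add: sum_distrib_left sum.swap[of _ A] mult_ac)

lemma hi_sum_left:
  "herm_inner (\<Sum>j\<in>A. (c j :: real) *\<^sub>R x j) y = (\<Sum>j\<in>A. of_real (c j) * herm_inner (x j) y)"
  unfolding herm_inner_def
  by (simp add: sum_distrib_left sum_distrib_right sum.swap[of _ A] mult_ac scaleR_vec_def scaleR_conv_of_real)

lemma hi_self_zero:
  assumes "herm_inner v v = 0" shows "v = 0"
proof -
  have "(\<Sum>i\<in>UNIV. cnj (v $ i) * v $ i) = 0" using assms by (simp add: herm_inner_def)
  moreover have "\<And>i. cnj (v $ i) * v $ i = complex_of_real ((cmod (v $ i))\<^sup>2)"
    by (metis complex_norm_square mult.commute of_real_power)
  ultimately have "(\<Sum>i\<in>UNIV. complex_of_real ((cmod (v $ i))\<^sup>2)) = 0"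
    by simp
  hence "(\<Sum>i\<in>UNIV. (cmod (v $ i))\<^sup>2) = 0"
    by (metis of_real_eq_0_iff of_real_sum)
  hence "\<forall>i\<in>UNIV. (cmod (v $ i))\<^sup>2 = 0"
    by (subst (asm) sum_nonneg_eq_0_iff) auto
  thus ?thesis by (simp add: vec_eq_iff)
qed

theorem lemma4p2:
  fixes x :: "nat \<Rightarrow> complex ^ 'd" and n :: nat
  assumes indep: "\<And>c :: nat \<Rightarrow> real. (\<Sum>j<n. c j *\<^sub>R x j) = 0 \<Longrightarrow> (\<forall>j<n. c j = 0)"
    and real_inner: "\<And>j k. j < n \<Longrightarrow> k < n \<Longrightarrow> herm_inner (x j) (x k) \<in> \<real>"
  shows "n \<le> CARD('d)"
proof -
  define G where "G j k = Re (herm_inner (x j) (x k))" for j k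
  have G: "herm_inner (x j) (x k) = of_real (G j k)" if "j < n" "k < n" for j k
    using real_inner[OF that] unfolding G_def by (auto simp: Reals_def)
  have realz: "\<forall>j<n. c j = 0" if h: "\<forall>k<n. (\<Sum>j<n. c j * G k j) = 0" for c :: "nat \<Rightarrow> real"
  proof -
    define v where "v = (\<Sum>j<n. c j *\<^sub>R x j)"
    have "herm_inner (x k) v = 0" if "k < n" for k
    proof -
      have "herm_inner (x k) v = (\<Sum>j<n. of_real (c j) * herm_inner (x k) (x j))"
        unfolding v_def using hi_sum_right[of "x k" "\<lambda>j. of_real (c j)" x "{..<n}"]
        by (simp add: scaleR_conv_of_real vector_scalar_mult_def scaleR_vec_def)
      also have "\<dots> = of_real (\<Sum>j<n. c j * G k j)" using G that by simp
      finally show ?thesis using h that by simp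
    qed
    hence "herm_inner v v = 0"
      using hi_sum_left[of c x "{..<n}" v] by (simp add: v_def[symmetric])
    hence "v = 0" by (rule hi_self_zero)
    thus ?thesis using indep v_def by simp
  qed
  have cplx: "\<forall>j<n. a j = 0" if h: "(\<Sum>j<n. a j *s x j) = 0" for a
  proof -
    have e: "(\<Sum>j<n. a j * of_real (G k j)) = 0" if "k < n" for k
    proof -
      have "(\<Sum>j<n. a j * of_real (G k j)) = (\<Sum>j<n. a j * herm_inner (x k) (x j))"
        using G that by simp
      also have "\<dots> = herm_inner (x k) (\<Sum>j<n. a j *s x j)" by (rule hi_sum_right[symmetric])
      also have "\<dots> = 0" using h by (simp add: herm_inner_def)
      finally show ?thesis .
    qed
    have "\<forall>j<n. Re (a j) = 0"
      proof (rule realz, intro allI impI)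
      fix k assume "k < n"
      from arg_cong[where f=Re, OF e[OF this]] show "(\<Sum>j<n. Re (a j) * G k j) = 0"
        by (simp add: Re_sum)
    qed
    moreover have "\<forall>j<n. Im (a j) = 0"
      proof (rule realz, intro allI impI)
      fix k assume "k < n"
      from arg_cong[where f=Im, OF e[OF this]] show "(\<Sum>j<n. Im (a j) * G k j) = 0"
        by (simp add: Im_sum)
    qed
    ultimately show ?thesis by (simp add: complex_eq_iff)
  qed
  have inj: "inj_on x {..<n}"
  proof (rule inj_onI, rule ccontr)
    fix i j assume ij: "i \<in> {..<n}" "j \<in> {..<n}" "x i = x j" "i \<noteq> j"
    define c :: "nat \<Rightarrow> real" where "c = (\<lambda>k. if k = i then 1 else if k = j then -1 else 0)"
    have "(\<Sum>k<n. c k *\<^sub>R x k) = (\<Sum>k\<in>{i,j}. c k *\<^sub>R x k)"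
      by (rule sum.mono_neutral_right) (use ij in \<open>auto simp: c_def\<close>)
    also have "\<dots> = 0" using ij by (simp add: c_def)
    finally show False using indep[of c] ij by (auto simp: c_def)
  qed
  have "vec.independent (x ` {..<n})"
  proof (rule vec.independent_if_scalars_zero)
    show "finite (x ` {..<n})" by simp
    fix f v assume s: "(\<Sum>v\<in>x ` {..<n}. f v *s v) = 0" and v: "v \<in> x ` {..<n}"
    have "(\<Sum>j<n. f (x j) *s x j) = 0" using s by (simp add: sum.reindex[OF inj])
    from cplx[OF this] v show "f v = 0" by auto
  qed
  from vec.independent_bound_general[OF this]
  have "card (x ` {..<n}) \<le> vec.dim (x ` {..<n})" by simp
  also have "\<dots> \<le> CARD('d)" by (rule dim_subset_UNIV_cart_gen)
  finally show ?thesis using card_image[OF inj] by simp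
qed

end
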